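(* Let $F$, $H$, $X$, $\Omega$, $Q$ and the sequences generated by the IneIREG method be as described in the context. Suppose: $(\eta_k)$ is nonincreasing; $\alpha_0\in[0,1]$ and $(\alpha_k/\eta_k)$ is nonincreasing; $\lambda_k\in[\underline\lambda,\overline\lambda]$ for all $k\ge0$ with $0<\underline\lambda\le\overline\lambda\le1/(L_F+\eta_0L_H)$; and $\sum_{k=0}^\infty\delta_k\eta_k^{-1}<+\infty$. For $k\ge1$ let $\Lambda_k=\sum_{j=0}^{k-1}\lambda_j$ and $\overline y_k=\Lambda_k^{-1}\sum_{j=0}^{k-1}\lambda_jy_j$. Then for all $k\ge1$, $$0\le\mathrm{Gap}(\overline y_k,F,X)\le\frac1k\Big(\frac{D_X^2}{2\underline\lambda}\Big)+\frac{\sum_{j=0}^{k-1}\delta_j}{k}\Big(\frac{1}{2\underline\lambda}\Big)+\frac{\sum_{j=0}^{k-1}\eta_j}{k}\Big(\frac{\overline\lambda C_HD_X}{\underline\lambda}\Big).$$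
   Context: Work in $\mathbb{R}^n$ with Euclidean inner product $\langle\cdot,\cdot\rangle$ and norm $\|\cdot\|$. The maps $F\colon \mathrm{Dom}\,F\to\mathbb{R}^n$ and $H\colon\mathrm{Dom}\,H\to\mathbb{R}^n$ are monotone and Lipschitz continuous with constants $L_F>0$ and $L_H>0$. $X$ is a nonempty compact convex set and $\Omega$ a nonempty closed convex set with $X\subset\Omega\subset\mathrm{Dom}\,F\cap\mathrm{Dom}\,H$; $P_X,P_\Omega$ denote orthogonal projections. $Q:=\{x\in X:\langle F(x),y-x\rangle\ge0\ \forall y\in X\}$ is assumed nonempty. $D_X:=\sup_{x,y\in X}\|x-y\|$, $C_H:=\sup_{x\in X}\|H(x)\|$. $\mathrm{Gap}(z,F,X):=\sup_{x\in X}\langle F(x),z-x\rangle$. IneIREG method: start with $x_0=x_{-1}\in X$; for $k=0,1,\dots$, with parameters $\alpha_k\ge0$, $\lambda_k>0$, $\eta_k>0$, set $w_k=x_k+\alpha_k(x_k-x_{k-1})$, $w'_k=P_\Omega(w_k)$, $y_k=P_X\big(w_k-\lambda_k(F(w'_k)+\eta_kH(w'_k))\big)$, $x_{k+1}=P_X\big(w_k-\lambda_k(F(y_k)+\eta_kH(y_k))\big)$. Also $\delta_k:=\alpha_k(1+\alpha_k)\|x_k-x_{k-1}\|^2$ for $k\ge0$. *)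

theory Defs
  imports "HOL-Analysis.Analysis"
begin

definition monotone_op :: "('a::real_inner \<Rightarrow> 'a) \<Rightarrow> 'a set \<Rightarrow> bool" where
  "monotone_op F D \<longleftrightarrow> (\<forall>x\<in>D. \<forall>y\<in>D. inner (F x - F y) (x - y) \<ge> 0)"

definition VI_sol :: "('a::real_inner \<Rightarrow> 'a) \<Rightarrow> 'a set \<Rightarrow> 'a set" where
  "VI_sol F X = {x \<in> X. \<forall>y\<in>X. inner (F x) (y - x) \<ge> 0}"

definition Gap :: "'a::real_inner \<Rightarrow> ('a \<Rightarrow> 'a) \<Rightarrow> 'a set \<Rightarrow> real" where
  "Gap z F X = (SUP x\<in>X. inner (F x) (z - x))"

end

theory Submission
  imports Defs
begin

lemma eg_step:
  fixes w z y x1 g1 g2 :: "'a::euclidean_space"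
  assumes cX: "convex X" and clX: "closed X" and z: "z \<in> X"
    and y: "y = closest_point X (w - lam *\<^sub>R g1)"
    and x1: "x1 = closest_point X (w - lam *\<^sub>R g2)"
    and lip: "norm (g2 - g1) \<le> L * norm (y - w)"
    and lam0: "0 \<le> lam" and L0: "0 \<le> L" and lamL: "lam * L \<le> 1"
  shows "2 * lam * inner g2 (y - z) \<le> (norm (w - z))\<^sup>2 - (norm (x1 - z))\<^sup>2"
proof -
  have ne: "X \<noteq> {}" using z by auto
  have x1X: "x1 \<in> X" using x1 closest_point_in_set[OF clX ne] by simp
  have a: "inner (w - lam *\<^sub>R g2 - x1) (z - x1) \<le> 0"
    using closest_point_dot[OF cX clX z, of "w - lam *\<^sub>R g2"] x1 by simp
  have b: "inner (w - lam *\<^sub>R g1 - y) (x1 - y) \<le> 0"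
    using closest_point_dot[OF cX clX x1X, of "w - lam *\<^sub>R g1"] y by simp
  have c0: "inner (g2 - g1) (y - x1) \<le> L * norm (y - w) * norm (y - x1)"
    using norm_cauchy_schwarz[of "g2 - g1" "y - x1"] lip
    by (meson mult_right_mono norm_ge_zero order_trans)
  have c1: "lam * (L * norm (y - w) * norm (y - x1)) \<le> norm (y - w) * norm (y - x1)"
  proof -
    have "lam * (L * norm (y - w) * norm (y - x1)) = (lam * L) * (norm (y - w) * norm (y - x1))" by simp
    also have "\<dots> \<le> 1 * (norm (y - w) * norm (y - x1))"
      by (rule mult_right_mono[OF lamL]) simp
    finally show ?thesis by simp
  qed
  have c: "lam * inner (g2 - g1) (y - x1) \<le> norm (y - w) * norm (y - x1)"
    using mult_left_mono[OF c0 lam0] c1 by linarith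
  have d: "2 * (norm (y - w) * norm (y - x1)) \<le> (norm (y - w))\<^sup>2 + (norm (y - x1))\<^sup>2"
    using sum_squares_bound[of "norm (y - w)" "norm (y - x1)"]  by (simp add: algebra_simps)
  have e1: "(norm (y - w))\<^sup>2 = inner (y - w) (y - w)" by (simp add: power2_norm_eq_inner)
  have e2: "(norm (y - x1))\<^sup>2 = inner (y - x1) (y - x1)" by (simp add: power2_norm_eq_inner)
  have e3: "(norm (w - z))\<^sup>2 = inner (w - z) (w - z)" by (simp add: power2_norm_eq_inner)
  have e4: "(norm (x1 - z))\<^sup>2 = inner (x1 - z) (x1 - z)" by (simp add: power2_norm_eq_inner)
  show ?thesis using a b c d unfolding e1 e2 e3 e4
    by (simp add: inner_diff_left inner_diff_right inner_commute algebra_simps)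
qed

lemma norm_extrap:
  fixes u v :: "'a::real_inner"
  shows "(norm ((1+a) *\<^sub>R u - a *\<^sub>R v))\<^sup>2 = (1+a) * (norm u)\<^sup>2 - a * (norm v)\<^sup>2 + a * (1+a) * (norm (u - v))\<^sup>2"
  by (simp add: power2_norm_eq_inner inner_diff_left inner_diff_right inner_add_left inner_add_right inner_commute algebra_simps)

lemma tele:
  fixes \<phi> \<alpha> :: "nat \<Rightarrow> real"
  assumes p0: "\<And>j. 0 \<le> \<phi> j" and pD: "\<And>j. \<phi> j \<le> D" and ad: "\<And>j. \<alpha> (Suc j) \<le> \<alpha> j"
    and a01: "\<alpha> 0 \<le> 1" and a0: "\<And>j. 0 \<le> \<alpha> j"
  shows "(\<Sum>j<Suc n. \<phi> j - \<phi> (Suc j) + \<alpha> j * (\<phi> j - \<phi> (j - 1))) + \<phi> (Suc n) \<le> (1 - \<alpha> n) * D + \<alpha> n * \<phi> n"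
proof (induction n)
  case 0
  have "(1 - \<alpha> 0) * \<phi> 0 \<le> (1 - \<alpha> 0) * D" using a01 pD by (intro mult_left_mono) auto
  then show ?case by (simp add: algebra_simps)
next
  case (Suc n)
  have "(\<alpha> n - \<alpha> (Suc n)) * \<phi> n \<le> (\<alpha> n - \<alpha> (Suc n)) * D"
    using ad pD by (intro mult_left_mono) (auto simp: algebra_simps)
  moreover have "(\<Sum>j<Suc (Suc n). \<phi> j - \<phi> (Suc j) + \<alpha> j * (\<phi> j - \<phi> (j - 1))) =
     (\<Sum>j<Suc n. \<phi> j - \<phi> (Suc j) + \<alpha> j * (\<phi> j - \<phi> (j - 1))) + (\<phi> (Suc n) - \<phi> (Suc (Suc n)) + \<alpha> (Suc n) * (\<phi> (Suc n) - \<phi> n))"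
    by simp
  ultimately show ?case using Suc.IH by (simp add: algebra_simps)
qed

lemma tele2:
  fixes \<phi> \<alpha> :: "nat \<Rightarrow> real"
  assumes p0: "\<And>j. 0 \<le> \<phi> j" and pD: "\<And>j. \<phi> j \<le> D" and ad: "\<And>j. \<alpha> (Suc j) \<le> \<alpha> j"
    and a01: "\<alpha> 0 \<le> 1" and a0: "\<And>j. 0 \<le> \<alpha> j" and k: "k \<ge> 1"
  shows "(\<Sum>j<k. \<phi> j - \<phi> (Suc j) + \<alpha> j * (\<phi> j - \<phi> (j - 1))) \<le> D"
proof -
  obtain n where n: "k = Suc n" using k by (cases k) auto
  have a1: "\<alpha> n \<le> 1"
  proof (induction n)
    case 0 then show ?case using a01 by simp
  next
    case (Suc n) then show ?case using ad[of n] by simp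
  qed
  have "\<alpha> n * \<phi> n \<le> \<alpha> n * D" using a0 pD by (intro mult_left_mono) auto
  moreover have "(\<Sum>j<Suc n. \<phi> j - \<phi> (Suc j) + \<alpha> j * (\<phi> j - \<phi> (j - 1))) + \<phi> (Suc n) \<le> (1 - \<alpha> n) * D + \<alpha> n * \<phi> n"
    by (rule tele[OF assms(1-5)])
  ultimately show ?thesis using p0[of "Suc n"] n by (simp add: algebra_simps)
qed

lemma bdd_norm:
  assumes "compact X" "continuous_on X f"
  shows "\<exists>B. \<forall>z\<in>X. norm (f z) \<le> B"
  using compact_imp_bounded[OF compact_continuous_image[OF assms(2,1)]]
  by (auto simp: bounded_iff)

theorem proposition3p5:
  fixes F H :: "'a::euclidean_space \<Rightarrow> 'a"
    and DomF DomH X \<Omega> :: "'a set"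
    and LF LH lamlo lamup :: real
    and alpha lam eta :: "nat \<Rightarrow> real"
    and x y w w' :: "nat \<Rightarrow> 'a"
  assumes monoF: "monotone_op F DomF" and monoH: "monotone_op H DomH"
    and LF_pos: "LF > 0" and LH_pos: "LH > 0"
    and lipF: "LF-lipschitz_on DomF F" and lipH: "LH-lipschitz_on DomH H"
    and X_ne: "X \<noteq> {}" and X_compact: "compact X" and X_convex: "convex X"
    and \<Omega>_closed: "closed \<Omega>" and \<Omega>_convex: "convex \<Omega>"
    and X_sub: "X \<subseteq> \<Omega>" and \<Omega>_sub: "\<Omega> \<subseteq> DomF \<inter> DomH"
    and Q_ne: "VI_sol F X \<noteq> {}"
    and alpha_nonneg: "\<And>k. alpha k \<ge> 0"
    and eta_pos: "\<And>k. eta k > 0"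
    and x0: "x 0 \<in> X"
    and w_def: "\<And>k. w k = x k + alpha k *\<^sub>R (x k - x (k - 1))"
    and w'_def: "\<And>k. w' k = closest_point \<Omega> (w k)"
    and y_def: "\<And>k. y k = closest_point X (w k - lam k *\<^sub>R (F (w' k) + eta k *\<^sub>R H (w' k)))"
    and x_def: "\<And>k. x (Suc k) = closest_point X (w k - lam k *\<^sub>R (F (y k) + eta k *\<^sub>R H (y k)))"
    and eta_noninc: "\<And>k. eta (Suc k) \<le> eta k"
    and alpha0: "alpha 0 \<le> 1"
    and ratio_noninc: "\<And>k. alpha (Suc k) / eta (Suc k) \<le> alpha k / eta k"
    and lamlo_pos: "0 < lamlo" and lamlo_le: "lamlo \<le> lamup"
    and lamup_le: "lamup \<le> 1 / (LF + eta 0 * LH)"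
    and lam_bounds: "\<And>k. lamlo \<le> lam k \<and> lam k \<le> lamup"
    and delta_sum: "summable (\<lambda>k. alpha k * (1 + alpha k) * (norm (x k - x (k - 1)))\<^sup>2 / eta k)"
  shows "\<forall>k\<ge>1.
    (let \<delta> = (\<lambda>j. alpha j * (1 + alpha j) * (norm (x j - x (j - 1)))\<^sup>2);
         DX = diameter X;
         CH = (SUP z\<in>X. norm (H z));
         \<Lambda> = (\<Sum>j<k. lam j);
         ybar = (1 / \<Lambda>) *\<^sub>R (\<Sum>j<k. lam j *\<^sub>R y j)
     in 0 \<le> Gap ybar F X \<and>
        Gap ybar F X \<le> (1 / real k) * (DX\<^sup>2 / (2 * lamlo))
          + ((\<Sum>j<k. \<delta> j) / real k) * (1 / (2 * lamlo))
          + ((\<Sum>j<k. eta j) / real k) * (lamup * CH * DX / lamlo))"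
proof (intro allI impI)
  fix k :: nat assume k1: "k \<ge> 1"
  define DX where "DX = diameter X"
  define CH where "CH = (SUP z\<in>X. norm (H z))"
  define \<delta> where "\<delta> = (\<lambda>j. alpha j * (1 + alpha j) * (norm (x j - x (j - 1)))\<^sup>2)"
  define \<Lambda> where "\<Lambda> = (\<Sum>j<k. lam j)"
  define ybar where "ybar = (1 / \<Lambda>) *\<^sub>R (\<Sum>j<k. lam j *\<^sub>R y j)"
  have clX: "closed X" using X_compact compact_imp_closed by blast
  have bX: "bounded X" using X_compact compact_imp_bounded by blast
  have \<Omega>_ne: "\<Omega> \<noteq> {}" using X_ne X_sub by blast
  have DXb: "norm (a - b) \<le> DX" if "a \<in> X" "b \<in> X" for a b
    using diameter_bounded_bound[OF bX that] by (simp add: DX_def dist_norm)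
  have DX0: "0 \<le> DX" using DXb X_ne by (metis all_not_in_conv norm_ge_zero order_trans)
  have xX: "x j \<in> X" for j
    by (cases j) (auto simp: x0 x_def closest_point_in_set[OF clX X_ne])
  have yX: "y j \<in> X" for j by (simp add: y_def closest_point_in_set[OF clX X_ne])
  have w'\<Omega>: "w' j \<in> \<Omega>" for j by (simp add: w'_def closest_point_in_set[OF \<Omega>_closed \<Omega>_ne])
  have eta_le0: "eta j \<le> eta 0" for j
  proof (induction j)
    case (Suc j) then show ?case using eta_noninc[of j] by linarith
  qed simp
  have alpha_dec: "alpha (Suc j) \<le> alpha j" for j
  proof -
    have "alpha (Suc j) = (alpha (Suc j) / eta (Suc j)) * eta (Suc j)" using eta_pos[of "Suc j"] by simp
    also have "\<dots> \<le> (alpha j / eta j) * eta (Suc j)"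
      using ratio_noninc[of j] eta_pos[of "Suc j"] by (intro mult_right_mono) auto
    also have "\<dots> \<le> (alpha j / eta j) * eta j"
      using eta_noninc[of j] alpha_nonneg[of j] eta_pos[of j] by (intro mult_left_mono) auto
    also have "\<dots> = alpha j" using eta_pos[of j] by simp
    finally show ?thesis .
  qed
  have lam_pos: "0 < lam j" for j using lam_bounds[of j] lamlo_pos by linarith
  have Hcont: "continuous_on X H"
    using lipschitz_on_continuous_on[OF lipschitz_on_subset[OF lipH]] X_sub \<Omega>_sub by blast
  have Fcont: "continuous_on X F"
    using lipschitz_on_continuous_on[OF lipschitz_on_subset[OF lipF]] X_sub \<Omega>_sub by blast
  obtain BH where BH: "\<And>z. z \<in> X \<Longrightarrow> norm (H z) \<le> BH" using bdd_norm[OF X_compact Hcont] by blast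
  obtain BF where BF: "\<And>z. z \<in> X \<Longrightarrow> norm (F z) \<le> BF" using bdd_norm[OF X_compact Fcont] by blast
  have CHb: "norm (H z) \<le> CH" if "z \<in> X" for z
    unfolding CH_def by (rule cSUP_upper[OF that]) (auto intro!: bdd_aboveI2 BH)
  have CH0: "0 \<le> CH" using CHb X_ne by (metis all_not_in_conv norm_ge_zero order_trans)
  have \<Lambda>lo: "real k * lamlo \<le> \<Lambda>"
  proof -
    have "(\<Sum>j<k. lamlo) \<le> \<Lambda>" unfolding \<Lambda>_def using lam_bounds by (intro sum_mono) auto
    then show ?thesis by simp
  qed
  have kpos: "0 < real k" using k1 by simp
  have "0 < real k * lamlo" using kpos lamlo_pos by simp
  then have \<Lambda>pos: "0 < \<Lambda>" using \<Lambda>lo by linarith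
  have step: "2 * lam j * inner (F z) (y j - z) \<le>
      ((norm (x j - z))\<^sup>2 - (norm (x (Suc j) - z))\<^sup>2 + alpha j * ((norm (x j - z))\<^sup>2 - (norm (x (j - 1) - z))\<^sup>2))
      + \<delta> j + 2 * lamup * eta j * CH * DX" if z: "z \<in> X" for j z
  proof -
    define L where "L = LF + eta j * LH"
    have L0: "0 \<le> L" unfolding L_def using LF_pos LH_pos eta_pos[of j] by simp
    have "L \<le> LF + eta 0 * LH" unfolding L_def using eta_le0[of j] LH_pos by simp
    moreover have "0 < LF + eta 0 * LH" using LF_pos LH_pos eta_pos[of 0] by (simp add: add_pos_pos)
    ultimately have "lam j * L \<le> lamup * (LF + eta 0 * LH)"
      using lam_bounds[of j] lam_pos[of j] L0 by (intro mult_mono) auto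
    also have "\<dots> \<le> 1" using lamup_le \<open>0 < LF + eta 0 * LH\<close> by (simp add: le_divide_eq)
    finally have lamL: "lam j * L \<le> 1" .
    have yO: "y j \<in> DomF \<inter> DomH" "w' j \<in> DomF \<inter> DomH" using yX X_sub \<Omega>_sub w'\<Omega> by blast+
    have nyw: "norm (y j - w' j) \<le> norm (y j - w j)"
    proof -
      have "closest_point \<Omega> (y j) = y j" using yX X_sub closest_point_self by blast
      then show ?thesis using closest_point_lipschitz[OF \<Omega>_convex \<Omega>_closed \<Omega>_ne, of "y j" "w j"]
        by (simp add: w'_def dist_norm)
    qed
    have lipG: "norm ((F (y j) + eta j *\<^sub>R H (y j)) - (F (w' j) + eta j *\<^sub>R H (w' j))) \<le> L * norm (y j - w j)"
    proof -
      have f: "norm (F (y j) - F (w' j)) \<le> LF * norm (y j - w' j)"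
        using lipschitz_onD[OF lipF, of "y j" "w' j"] yO by (simp add: dist_norm)
      have h: "norm (H (y j) - H (w' j)) \<le> LH * norm (y j - w' j)"
        using lipschitz_onD[OF lipH, of "y j" "w' j"] yO by (simp add: dist_norm)
      have "norm ((F (y j) + eta j *\<^sub>R H (y j)) - (F (w' j) + eta j *\<^sub>R H (w' j)))
          = norm ((F (y j) - F (w' j)) + eta j *\<^sub>R (H (y j) - H (w' j)))" by (simp add: algebra_simps)
      also have "\<dots> \<le> norm (F (y j) - F (w' j)) + eta j * norm (H (y j) - H (w' j))"
        using norm_triangle_ineq eta_pos[of j] by (metis abs_of_pos norm_scaleR)
      also have "\<dots> \<le> LF * norm (y j - w' j) + eta j * (LH * norm (y j - w' j))"
        using f h eta_pos[of j] by (intro add_mono mult_left_mono) auto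
      also have "\<dots> = L * norm (y j - w' j)" by (simp add: L_def algebra_simps)
      also have "\<dots> \<le> L * norm (y j - w j)" using nyw L0 by (rule mult_left_mono)
      finally show ?thesis .
    qed
    have es: "2 * lam j * inner (F (y j) + eta j *\<^sub>R H (y j)) (y j - z) \<le> (norm (w j - z))\<^sup>2 - (norm (x (Suc j) - z))\<^sup>2"
      by (rule eg_step[OF X_convex clX z y_def x_def lipG]) (use lam_pos[of j] L0 lamL in auto)
    have wz: "w j - z = (1 + alpha j) *\<^sub>R (x j - z) - alpha j *\<^sub>R (x (j - 1) - z)"
      by (simp add: w_def algebra_simps)
    have wn: "(norm (w j - z))\<^sup>2 = (1 + alpha j) * (norm (x j - z))\<^sup>2 - alpha j * (norm (x (j - 1) - z))\<^sup>2 + \<delta> j"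
      unfolding wz norm_extrap \<delta>_def by simp
    have mon: "inner (F z) (y j - z) \<le> inner (F (y j)) (y j - z)"
    proof -
      have "y j \<in> DomF" "z \<in> DomF" using yX z X_sub \<Omega>_sub by blast+
      then have "inner (F (y j) - F z) (y j - z) \<ge> 0" using monoF unfolding monotone_op_def by blast
      then show ?thesis by (simp add: inner_diff_left)
    qed
    have hb: "- (CH * DX) \<le> inner (H (y j)) (y j - z)"
    proof -
      have "\<bar>inner (H (y j)) (y j - z)\<bar> \<le> norm (H (y j)) * norm (y j - z)" by (rule Cauchy_Schwarz_ineq2)
      also have "\<dots> \<le> CH * DX" using CHb[OF yX] DXb[OF yX z] CH0 by (intro mult_mono) auto
      finally show ?thesis by linarith
    qed
    have "inner (F (y j) + eta j *\<^sub>R H (y j)) (y j - z) = inner (F (y j)) (y j - z) + eta j * inner (H (y j)) (y j - z)"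
      by (simp add: inner_add_left)
    moreover have "eta j * (- (CH * DX)) \<le> eta j * inner (H (y j)) (y j - z)"
      using hb eta_pos[of j] by (intro mult_left_mono) auto
    ultimately have g: "inner (F z) (y j - z) - eta j * CH * DX \<le> inner (F (y j) + eta j *\<^sub>R H (y j)) (y j - z)"
      using mon by simp
    have "2 * lam j * (inner (F z) (y j - z) - eta j * CH * DX) \<le> 2 * lam j * inner (F (y j) + eta j *\<^sub>R H (y j)) (y j - z)"
      using g lam_pos[of j] by (intro mult_left_mono) auto
    moreover have "lam j * (eta j * CH * DX) \<le> lamup * (eta j * CH * DX)"
      using lam_bounds[of j] eta_pos[of j] CH0 DX0 by (intro mult_right_mono) auto
    ultimately show ?thesis using es wn by (simp add: algebra_simps)
  qed
  have main: "inner (F z) (ybar - z) \<le> (DX\<^sup>2 + (\<Sum>j<k. \<delta> j) + 2 * lamup * CH * DX * (\<Sum>j<k. eta j)) / (2 * \<Lambda>)"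
    if z: "z \<in> X" for z
  proof -
    define \<phi> where "\<phi> = (\<lambda>j. (norm (x j - z))\<^sup>2)"
    have t: "(\<Sum>j<k. \<phi> j - \<phi> (Suc j) + alpha j * (\<phi> j - \<phi> (j - 1))) \<le> DX\<^sup>2"
    proof (rule tele2[OF _ _ alpha_dec alpha0 alpha_nonneg k1])
      fix j show "0 \<le> \<phi> j" by (simp add: \<phi>_def)
      show "\<phi> j \<le> DX\<^sup>2" unfolding \<phi>_def using DXb[OF xX z] by (intro power_mono) auto
    qed
    have "(\<Sum>j<k. 2 * lam j * inner (F z) (y j - z)) \<le>
       (\<Sum>j<k. (\<phi> j - \<phi> (Suc j) + alpha j * (\<phi> j - \<phi> (j - 1))) + \<delta> j + (2 * lamup * CH * DX) * eta j)"
    proof (rule sum_mono)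
      fix j
      have e: "2 * lamup * eta j * CH * DX = (2 * lamup * CH * DX) * eta j" by simp
      show "2 * lam j * inner (F z) (y j - z) \<le> (\<phi> j - \<phi> (Suc j) + alpha j * (\<phi> j - \<phi> (j - 1))) + \<delta> j + (2 * lamup * CH * DX) * eta j"
        using step[OF z, of j] unfolding \<phi>_def e .
    qed
    also have "\<dots> = (\<Sum>j<k. \<phi> j - \<phi> (Suc j) + alpha j * (\<phi> j - \<phi> (j - 1))) + (\<Sum>j<k. \<delta> j) + 2 * lamup * CH * DX * (\<Sum>j<k. eta j)"
      by (simp only: sum.distrib sum_distrib_left)
    also have "\<dots> \<le> DX\<^sup>2 + (\<Sum>j<k. \<delta> j) + 2 * lamup * CH * DX * (\<Sum>j<k. eta j)" using t by simp
    finally have s1: "(\<Sum>j<k. 2 * lam j * inner (F z) (y j - z)) \<le> DX\<^sup>2 + (\<Sum>j<k. \<delta> j) + 2 * lamup * CH * DX * (\<Sum>j<k. eta j)" .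
    have pt: "2 * lam j * inner (F z) (y j - z) = 2 * (inner (F z) (lam j *\<^sub>R y j) - lam j * inner (F z) z)" for j
      by (simp add: inner_diff_right algebra_simps)
    have "(\<Sum>j<k. 2 * lam j * inner (F z) (y j - z)) = 2 * (\<Sum>j<k. inner (F z) (lam j *\<^sub>R y j) - lam j * inner (F z) z)"
      unfolding pt by (simp add: sum_distrib_left)
    also have "\<dots> = 2 * (inner (F z) (\<Sum>j<k. lam j *\<^sub>R y j) - \<Lambda> * inner (F z) z)"
      by (simp only: sum_subtractf inner_sum_right \<Lambda>_def sum_distrib_right)
    also have "\<dots> = 2 * \<Lambda> * inner (F z) (ybar - z)"
      using \<Lambda>pos by (simp add: ybar_def inner_diff_right algebra_simps)
    finally have "2 * \<Lambda> * inner (F z) (ybar - z) \<le> DX\<^sup>2 + (\<Sum>j<k. \<delta> j) + 2 * lamup * CH * DX * (\<Sum>j<k. eta j)"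
      using s1 by simp
    then show ?thesis using \<Lambda>pos by (simp add: le_divide_eq mult.commute mult.left_commute)
  qed
  define N where "N = DX\<^sup>2 + (\<Sum>j<k. \<delta> j) + 2 * lamup * CH * DX * (\<Sum>j<k. eta j)"
  have N0: "0 \<le> N" unfolding N_def \<delta>_def using alpha_nonneg eta_pos CH0 DX0 lamlo_pos lamlo_le
    by (intro add_nonneg_nonneg mult_nonneg_nonneg sum_nonneg) (auto intro: less_imp_le)
  have "N / (2 * \<Lambda>) \<le> N / (2 * (real k * lamlo))"
    using N0 \<Lambda>lo kpos lamlo_pos \<Lambda>pos by (intro divide_left_mono) auto
  also have "\<dots> = (1 / real k) * (DX\<^sup>2 / (2 * lamlo))
          + ((\<Sum>j<k. \<delta> j) / real k) * (1 / (2 * lamlo))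
          + ((\<Sum>j<k. eta j) / real k) * (lamup * CH * DX / lamlo)"
    unfolding N_def using kpos lamlo_pos by (simp add: field_simps)
  finally have Nb: "N / (2 * \<Lambda>) \<le> \<dots>" .
  have ybX: "ybar \<in> X"
  proof -
    have "ybar = (\<Sum>j<k. (lam j / \<Lambda>) *\<^sub>R y j)"
      by (simp add: ybar_def scaleR_sum_right)
    also have "\<dots> \<in> X"
    proof (rule convex_sum[OF _ X_convex])
      show "(\<Sum>j<k. lam j / \<Lambda>) = 1" using \<Lambda>pos by (simp add: \<Lambda>_def sum_divide_distrib[symmetric])
    qed (use lam_pos \<Lambda>pos yX in \<open>auto intro: less_imp_le\<close>)
    finally show ?thesis .
  qed
  have bdd: "bdd_above ((\<lambda>z. inner (F z) (ybar - z)) ` X)"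
  proof (rule bdd_aboveI2)
    fix z assume z: "z \<in> X"
    have "inner (F z) (ybar - z) \<le> norm (F z) * norm (ybar - z)" by (rule norm_cauchy_schwarz)
    also have "\<dots> \<le> BF * DX" using BF[OF z] DXb[OF ybX z] by (intro mult_mono) (auto intro: order_trans[OF norm_ge_zero])
    finally show "inner (F z) (ybar - z) \<le> BF * DX" .
  qed
  have g0: "0 \<le> Gap ybar F X"
    unfolding Gap_def by (rule cSUP_upper2[OF bdd ybX]) simp
  have g1: "Gap ybar F X \<le> N / (2 * \<Lambda>)"
    unfolding Gap_def by (rule cSUP_least[OF X_ne]) (use main in \<open>simp add: N_def\<close>)
  have fin: "0 \<le> Gap ybar F X \<and> Gap ybar F X \<le> (1 / real k) * (DX\<^sup>2 / (2 * lamlo))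
          + ((\<Sum>j<k. \<delta> j) / real k) * (1 / (2 * lamlo))
          + ((\<Sum>j<k. eta j) / real k) * (lamup * CH * DX / lamlo)"
    using g0 g1 Nb by linarith
  then show "let \<delta> = (\<lambda>j. alpha j * (1 + alpha j) * (norm (x j - x (j - 1)))\<^sup>2);
         DX = diameter X;
         CH = (SUP z\<in>X. norm (H z));
         \<Lambda> = (\<Sum>j<k. lam j);
         ybar = (1 / \<Lambda>) *\<^sub>R (\<Sum>j<k. lam j *\<^sub>R y j)
     in 0 \<le> Gap ybar F X \<and>
        Gap ybar F X \<le> (1 / real k) * (DX\<^sup>2 / (2 * lamlo))
          + ((\<Sum>j<k. \<delta> j) / real k) * (1 / (2 * lamlo))
          + ((\<Sum>j<k. eta j) / real k) * (lamup * CH * DX / lamlo)"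
    unfolding Let_def ybar_def \<Lambda>_def \<delta>_def DX_def CH_def .
qed

end
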